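(* Let $u$ be a partition with $\omega(u)=n$, and suppose $\dot n=n-u_1-3u_3>0$. Then $v_2(\tau_u)\ge u_3+\lceil\frac{1}{2}\dot n\rceil-1$, except when $\dot n=7u_7$, in which case $v_2(\tau_u)\ge u_3+\lceil\frac12\dot n\rceil-3$.
   Context: A partition is a sequence $u=(u_1,u_2,\dots)$ of nonnegative integers, almost all zero ($u_i$ = number of parts equal to $i$); weight $\omega(u)=\sum_i iu_i$, degree $d(u)=\sum_i u_i$. For a partition $u$ of weight $n\ge1$ with degree $d$, $\gamma_u=\prod_{i\ge1}(i+1)^{u_i}u_i!$ and $\tau_u=(-1)^{d-1}\frac{(n+d-2)!}{\gamma_u}$. $v_2$ is the $2$-adic valuation and $\lceil x\rceil$ is the least integer $\ge x$. *)

theory Defs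
  imports Complex_Main "HOL-Computational_Algebra.Primes"
begin

text \<open>A partition is a finitely supported sequence u : nat => nat, where u i (i >= 1)
  is the number of parts equal to i; the entry u 0 is required to be 0.\<close>
definition is_partition :: "(nat \<Rightarrow> nat) \<Rightarrow> bool" where
  "is_partition u \<longleftrightarrow> u 0 = 0 \<and> finite {i. u i \<noteq> 0}"

definition supp :: "(nat \<Rightarrow> nat) \<Rightarrow> nat set" where
  "supp u = {i. i \<ge> 1 \<and> u i \<noteq> 0}"

definition weight :: "(nat \<Rightarrow> nat) \<Rightarrow> nat" where
  "weight u = (\<Sum>i\<in>supp u. i * u i)"

definition degree :: "(nat \<Rightarrow> nat) \<Rightarrow> nat" where
  "degree u = (\<Sum>i\<in>supp u. u i)"

definition gamma :: "(nat \<Rightarrow> nat) \<Rightarrow> nat" where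
  "gamma u = (\<Prod>i\<in>supp u. (i + 1) ^ u i * fact (u i))"

definition tau :: "(nat \<Rightarrow> nat) \<Rightarrow> rat" where
  "tau u = (-1) ^ (degree u - 1) * of_nat (fact (weight u + degree u - 2)) / of_nat (gamma u)"

definition v2 :: "rat \<Rightarrow> int" where
  "v2 q = (case quotient_of q of (a, b) \<Rightarrow>
            int (multiplicity (2::int) a) - int (multiplicity (2::int) b))"

end

theory Submission
  imports Defs
begin

fun bs :: "nat \<Rightarrow> nat" where
  "bs n = (if n = 0 then 0 else n mod 2 + bs (n div 2))"
fun vv :: "nat \<Rightarrow> nat" where
  "vv n = (if n = 0 \<or> odd n then 0 else Suc (vv (n div 2)))"
declare bs.simps[simp del] vv.simps[simp del]

lemma bs0[simp]: "bs 0 = 0" by (simp add: bs.simps)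
lemma bs_even[simp]: "bs (2*k) = bs k" by (subst bs.simps) auto
lemma bs_odd[simp]: "bs (Suc (2*k)) = Suc (bs k)" by (subst bs.simps) auto
lemma vv_even[simp]: "k > 0 \<Longrightarrow> vv (2*k) = Suc (vv k)" by (subst vv.simps) auto
lemma vv_odd[simp]: "vv (Suc (2*k)) = 0" by (subst vv.simps) auto

lemma nat_parity_induct:
  assumes "P 0" "\<And>k. P k \<Longrightarrow> P (2*k)" "\<And>k. P k \<Longrightarrow> P (Suc (2*k))"
  shows "P n"
proof (induction n rule: less_induct)
  case (less n)
  show ?case
  proof (cases "n = 0")
    case True thus ?thesis using assms by simp
  next
    case False
    obtain k where k: "n = 2*k \<or> n = Suc (2*k)" by (metis oddE evenE Suc_eq_plus1)
    have "k < n" using k False by auto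
    thus ?thesis using k less assms by auto
  qed
qed

lemma bs_le: "bs n \<le> n"
  by (induction n rule: nat_parity_induct) auto

lemma bs_pos: "n > 0 \<Longrightarrow> bs n \<ge> 1"
  by (induction n rule: nat_parity_induct) auto

lemma bs_add: "bs (x + y) \<le> bs x + bs y"
proof (induction "x + y" arbitrary: x y rule: less_induct)
  case less
  show ?case
  proof (cases "x = 0 \<or> y = 0")
    case True thus ?thesis by auto
  next
    case False
    obtain p where p: "x = 2*p \<or> x = Suc (2*p)" by (metis oddE evenE Suc_eq_plus1)
    obtain q where q: "y = 2*q \<or> y = Suc (2*q)" by (metis oddE evenE Suc_eq_plus1)
    have pq: "p + q < x + y" using p q False by auto
    have IH: "bs (p + q) \<le> bs p + bs q" using less[of p q, OF pq] .
    from p q show ?thesis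
    proof (elim disjE)
      assume a: "x = 2*p" "y = 2*q"
      have e: "x + y = 2*(p+q)" using a by simp
      show ?thesis unfolding e using IH a by (simp only: bs_even)
    next
      assume a: "x = 2*p" "y = Suc (2*q)"
      have e: "x + y = Suc (2*(p+q))" using a by simp
      show ?thesis unfolding e using IH a by (simp only: bs_even bs_odd)
    next
      assume a: "x = Suc (2*p)" "y = 2*q"
      have e: "x + y = Suc (2*(p+q))" using a by simp
      show ?thesis unfolding e using IH a by (simp only: bs_even bs_odd)
    next
      assume a: "x = Suc (2*p)" "y = Suc (2*q)"
      have e: "x + y = 2*(p + Suc q)" using a by simp
      have pq1: "p + Suc q < x + y" using a by simp
      have q1: "q + 1 < x + y" using a by simp
      have h1: "bs (p + Suc q) \<le> bs p + bs (Suc q)" using less[of p "Suc q", OF pq1] .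
      have "bs (q + 1) \<le> bs q + bs 1" using less[of q 1, OF q1] .
      moreover have "bs 1 = 1" using bs_odd[of 0] by simp
      ultimately have h2: "bs (Suc q) \<le> Suc (bs q)" by simp
      show ?thesis unfolding e using h1 h2 a by (simp only: bs_even bs_odd)
    qed
  qed
qed

lemma bs_mult: "bs (a * b) \<le> bs a * bs b"
proof (induction a rule: nat_parity_induct)
  case 1 thus ?case by simp
next
  case (2 k) thus ?case by (simp add: mult.assoc)
next
  case (3 k)
  have "bs (Suc (2*k) * b) = bs (2*(k*b) + b)" by (simp add: algebra_simps)
  also have "\<dots> \<le> bs (k*b) + bs b" using bs_add[of "2*(k*b)" b] by simp
  also have "\<dots> \<le> bs k * bs b + bs b" using 3 by simp
  finally show ?case by simp
qed

lemma bs_pow2: "bs (2^a * x) = bs x"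
  by (induction a) (auto simp: mult.assoc)

lemma vv_pow2: "x > 0 \<Longrightarrow> vv (2^a * x) = a + vv x"
  by (induction a) (auto simp: mult.assoc)

lemma bs_pred: "x > 0 \<Longrightarrow> bs (x - 1) + 1 = bs x + vv x"
proof (induction x rule: nat_parity_induct)
  case 1 thus ?case by simp
next
  case (2 k)
  hence k: "k > 0" by simp
  have "2*k - 1 = Suc (2*(k-1))" using k by simp
  hence "bs (2*k - 1) = Suc (bs (k-1))" by simp
  thus ?case using 2 k by simp
next
  case (3 k) thus ?case by simp
qed



lemma X25: "(m::nat) < 25 \<Longrightarrow> m = 0 \<or> m = 1 \<or> m = 2 \<or> m = 3 \<or> m = 4 \<or> m = 5 \<or> m = 6 \<or> m = 7 \<or> m = 8 \<or> m = 9 \<or> m = 10 \<or> m = 11 \<or> m = 12 \<or> m = 13 \<or> m = 14 \<or> m = 15 \<or> m = 16 \<or> m = 17 \<or> m = 18 \<or> m = 19 \<or> m = 20 \<or> m = 21 \<or> m = 22 \<or> m = 23 \<or> m = 24" by presburger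

lemma bs_num: "bs 1 = 1" "bs 2 = 1" "bs 3 = 2" by (simp_all add: bs.simps)

lemma F: "1 \<le> x \<Longrightarrow> 8*(bs x + vv x) \<le> x + 24"
proof (induction x rule: less_induct)
  case (less x)
  show ?case
  proof (cases "x < 16")
    case True
    hence "x < 25" by simp
    then show ?thesis using less.prems
      by - (drule X25, elim disjE, simp_all add: bs.simps vv.simps)
  next
    case False
    obtain k where k: "x = 2*k \<or> x = Suc (2*k)" by (metis oddE evenE Suc_eq_plus1)
    have k8: "k \<ge> 8" "k \<ge> 1" "k < x" using k False by auto
    have IH: "8*(bs k + vv k) \<le> k + 24" using less.IH[OF k8(3)] k8 by simp
    from k show ?thesis
    proof
      assume "x = 2*k" thus ?thesis using IH k8 by simp
    next
      assume "x = Suc (2*k)" thus ?thesis using IH k8 by simp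
    qed
  qed
qed

lemma L1: "3 \<le> m \<Longrightarrow> m \<noteq> 4 \<Longrightarrow> 2*bs m + 2*vv m \<le> m + 1"
proof (cases "m < 7")
  case True
  assume "3 \<le> m" "m \<noteq> 4"
  have "m < 25" using True by simp
  thus ?thesis using \<open>3 \<le> m\<close> \<open>m \<noteq> 4\<close> by - (drule X25, elim disjE, simp_all add: bs.simps vv.simps)
next
  case False thus ?thesis using F[of m] by simp
qed

lemma L2: "3 \<le> m \<Longrightarrow> m \<noteq> 4 \<Longrightarrow> 2*bs (m-2) + 2*vv m \<le> m - 1 + (if m = 8 then 4 else 0)"
proof (cases "m < 25")
  case True
  assume "3 \<le> m" "m \<noteq> 4"
  have "m < 25" using True by simp
  thus ?thesis using \<open>3 \<le> m\<close> \<open>m \<noteq> 4\<close> by - (drule X25, elim disjE, simp_all add: bs.simps vv.simps)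
next
  case False
  have "m - 2 \<ge> 1" using False by simp
  from F[OF this] F[of m] False show ?thesis by simp
qed

lemma L3: "3 \<le> m \<Longrightarrow> m \<noteq> 4 \<Longrightarrow> 2*bs m + 6*vv m \<le> 2*m + (if m = 8 then 4 else 0)"
proof (cases "m < 15")
  case True
  assume "3 \<le> m" "m \<noteq> 4"
  have "m < 25" using True by simp
  thus ?thesis using \<open>3 \<le> m\<close> \<open>m \<noteq> 4\<close> by - (drule X25, elim disjE, simp_all add: bs.simps vv.simps)
next
  case False thus ?thesis using F[of m] by simp
qed

lemma G: "3 \<le> m \<Longrightarrow> m \<noteq> 4 \<Longrightarrow> 2*vv m + 2 \<le> m"
proof -
  assume m: "3 \<le> m" "m \<noteq> 4"
  have "2*vv m \<le> m - 1" using L1[OF m] bs_pos[of m] m by simp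
  moreover have "odd m \<Longrightarrow> vv m = 0" by (subst vv.simps) auto
  ultimately show ?thesis using m by presburger
qed

lemma C: assumes m: "3 \<le> m" "m \<noteq> 4"
  shows "2 * int (bs (2^a*m - 2)) \<le> 2^a * (int m - 1 - 2*int (vv m)) + (if m = 8 then 4 else 0)"
proof (cases a)
  case 0 thus ?thesis using L2[OF m] G[OF m] by (auto split: if_splits)
next
  case (Suc b)
  define y where "y = 2^b * m"
  have y0: "y > 0" using m y_def by simp
  have e: "2^a*m - 2 = 2*(y - 1)" using Suc y_def y0 by (simp add: algebra_simps)
  have "bs (y - 1) + 1 = bs y + vv y" using bs_pred[OF y0] .
  moreover have "bs y = bs m" "vv y = b + vv m" using y_def bs_pow2 vv_pow2 m by auto
  ultimately have bsv: "bs (2^a*m - 2) + 1 = bs m + b + vv m" using e by simp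
  define g where "g = int m - 1 - 2*int (vv m)"
  have g1: "g \<ge> 1" using G[OF m] g_def by simp
  define E :: int where "E = (if m = 8 then 4 else 0)"
  have "2*(int (bs m) + int b + int (vv m)) \<le> 2*2^b*g + E + 2"
  proof (induction b)
    case 0 show ?case using L3[OF m] g_def E_def by (auto split: if_splits)
  next
    case (Suc b)
    have "(2::int) \<le> 2*2^b*g" using g1 by (simp add: order_trans[OF _ mult_right_mono[of 1 "2^b" g]])
    thus ?case using Suc by simp
  qed
  thus ?thesis using bsv Suc g_def E_def by simp
qed


definition gg :: "nat \<Rightarrow> int" where
  "gg i = (if i = 1 \<or> i = 3 then 0 else int i - 2 * int (vv (i+1)))"

lemma key_mult: assumes m: "3 \<le> m" "m \<noteq> 4"
  shows "2 * int (bs (u*m)) \<le> int u * (int m - 1 - 2*int (vv m)) + 2*int (bs u)"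
proof -
  have h1: "bs (u*m) \<le> bs u * bs m" by (rule bs_mult)
  have h2: "2*int (bs m) - 2 \<le> int m - 1 - 2*int (vv m)" using L1[OF m] by simp
  have h3: "int (bs u) \<le> int u" using bs_le[of u] by simp
  have h4: "0 \<le> 2*int (bs m) - 2" using bs_pos[of m] m by simp
  have "int (bs u) * (2*int (bs m) - 2) \<le> int u * (int m - 1 - 2*int (vv m))"
    by (rule mult_mono[OF h3 h2]) (use h4 in auto)
  moreover have "2*int (bs (u*m)) \<le> 2*(int (bs u) * int (bs m))" using h1
    by (metis mult_le_cancel_left_pos of_nat_le_iff of_nat_mult zero_less_numeral)
  ultimately show ?thesis by (simp add: algebra_simps)
qed

lemma lemA: assumes "i \<ge> 1"
  shows "2 * int (bs (u*(i+1))) \<le> int u * gg i + 2*int (bs u)"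
proof (cases "i = 1 \<or> i = 3")
  case True
  have "bs (u*(i+1)) = bs u"
  proof (cases "i = 1")
    case True hence "u*(i+1) = 2*u" by simp
    thus ?thesis by (simp only: bs_even)
  next
    case False hence "i = 3" using \<open>i = 1 \<or> i = 3\<close> by simp
    hence "u*(i+1) = 2*(2*u)" by simp
    thus ?thesis by (simp only: bs_even)
  qed
  thus ?thesis using True by (simp add: gg_def)
next
  case False
  hence m: "3 \<le> i+1" "i+1 \<noteq> 4" using assms by auto
  show ?thesis using key_mult[OF m, of u] False by (simp add: gg_def)
qed

lemma odd_decomp: "(x::nat) > 0 \<Longrightarrow> \<exists>a b. x = 2^a * (2*b+1)"
proof (induction x rule: less_induct)
  case (less x)
  show ?case
  proof (cases "even x")
    case True
    then obtain k where k: "x = 2*k" by blast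
    hence "k < x" "k > 0" using less.prems by auto
    then obtain a b where "k = 2^a*(2*b+1)" using less.IH by blast
    hence "x = 2^(Suc a)*(2*b+1)" using k by simp
    thus ?thesis by blast
  next
    case False
    then obtain b where "x = 2*b+1" using oddE by blast
    hence "x = 2^0*(2*b+1)" by simp
    thus ?thesis by blast
  qed
qed

lemma lemB: assumes i: "i \<ge> 2" "i \<noteq> 3" and u0: "u0 \<ge> 1"
  shows "2 * int (bs (u0*(i+1) - 2)) + 2 \<le> int u0 * gg i + 2*int (bs u0) + (if i = 7 then 4 else 0)"
proof -
  define m where "m = i + 1"
  have m: "3 \<le> m" "m \<noteq> 4" using i m_def by auto
  define g where "g = int m - 1 - 2*int (vv m)"
  have gi: "gg i = g" using i g_def m_def by (simp add: gg_def)
  have g1: "g \<ge> 1" using G[OF m] g_def by simp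
  have E: "(if i = 7 then 4 else 0) = (if m = 8 then 4 else (0::int))" using m_def by simp
  obtain a b where ab: "u0 = 2^a*(2*b+1)" using odd_decomp[of u0] u0 by auto
  have pm: "2^a*m \<ge> 2"
  proof -
    have "(1::nat) \<le> 2^a" by simp
    hence "1*m \<le> 2^a*m" using mult_le_mono1 by blast
    thus ?thesis using m by linarith
  qed
  have split: "u0*m - 2 = 2^(Suc a)*(b*m) + (2^a*m - 2)" using ab pm by (simp add: algebra_simps)
  have s1: "bs (u0*m - 2) \<le> bs (b*m) + bs (2^a*m - 2)"
    using bs_add[of "2^(Suc a)*(b*m)" "2^a*m - 2"] unfolding split bs_pow2 .
  have s2: "bs u0 = bs b + 1" using ab bs_pow2[of a "2*b+1"] by simp
  have s3: "2 * int (bs (b*m)) \<le> int b * g + 2*int (bs b)" using key_mult[OF m, of b] g_def by simp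
  have s4: "2 * int (bs (2^a*m - 2)) \<le> 2^a * g + (if m = 8 then 4 else 0)" using C[OF m, of a] g_def by simp
  have s5: "int b * g \<le> 2^(Suc a) * int b * g"
  proof -
    have "int b * g \<ge> 0" using g1 by simp
    moreover have "(1::int) \<le> 2^(Suc a)" using one_le_power[of "2::int" "Suc a"] by simp
    ultimately show ?thesis by (metis mult.assoc mult_left_mono mult_1 mult.commute)
  qed
  have s6: "int u0 * g = 2^(Suc a) * int b * g + 2^a * g" using ab by (simp add: algebra_simps)
  show ?thesis unfolding gi E m_def[symmetric] using s1 s2 s3 s4 s5 s6 by linarith
qed


lemma bs_sum: "finite S \<Longrightarrow> bs (\<Sum>i\<in>S. f i) \<le> (\<Sum>i\<in>S. bs (f i))"
proof (induction S rule: finite_induct)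
  case empty thus ?case by simp
next
  case (insert x F)
  thus ?case using bs_add[of "f x" "sum f F"] by simp
qed

lemma core: assumes fin: "finite S" and S1: "\<And>i. i \<in> S \<Longrightarrow> i \<ge> 1"
  and i0: "i0 \<in> S" "i0 \<ge> 2" "i0 \<noteq> 3" and u0: "u i0 \<ge> 1"
  shows "2 * int (bs ((\<Sum>i\<in>S. u i * (i+1)) - 2)) + 2
     \<le> (\<Sum>i\<in>S. int (u i) * gg i + 2 * int (bs (u i))) + (if i0 = 7 then 4 else 0)"
proof -
  define S' where "S' = S - {i0}"
  have fin': "finite S'" using fin S'_def by simp
  have sumL: "(\<Sum>i\<in>S. u i * (i+1)) = u i0 * (i0+1) + (\<Sum>i\<in>S'. u i * (i+1))"
    using sum.remove[OF fin i0(1)] S'_def by simp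
  have sumR: "(\<Sum>i\<in>S. int (u i) * gg i + 2 * int (bs (u i))) =
     (int (u i0) * gg i0 + 2 * int (bs (u i0))) + (\<Sum>i\<in>S'. int (u i) * gg i + 2 * int (bs (u i)))"
    using sum.remove[OF fin i0(1)] S'_def by simp
  have "1*(i0+1) \<le> u i0 * (i0+1)" using u0 mult_le_mono1 by blast
  hence ge2: "u i0 * (i0+1) \<ge> 2" using i0 by simp
  have e: "(\<Sum>i\<in>S. u i * (i+1)) - 2 = (u i0 * (i0+1) - 2) + (\<Sum>i\<in>S'. u i * (i+1))"
    using sumL ge2 by simp
  have b1: "bs ((\<Sum>i\<in>S. u i * (i+1)) - 2) \<le> bs (u i0 * (i0+1) - 2) + (\<Sum>i\<in>S'. bs (u i * (i+1)))"
    unfolding e using bs_add[of "u i0 * (i0+1) - 2" "\<Sum>i\<in>S'. u i * (i+1)"] bs_sum[OF fin', of "\<lambda>i. u i * (i+1)"]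
    by linarith
  have b2: "(\<Sum>i\<in>S'. 2 * int (bs (u i * (i+1)))) \<le> (\<Sum>i\<in>S'. int (u i) * gg i + 2 * int (bs (u i)))"
    by (rule sum_mono) (use lemA S1 S'_def in auto)
  have b3: "2 * int (\<Sum>i\<in>S'. bs (u i * (i+1))) = (\<Sum>i\<in>S'. 2 * int (bs (u i * (i+1))))"
    by (simp add: sum_distrib_left)
  note b4 = lemB[OF i0(2) i0(3) u0]
  show ?thesis unfolding sumR using b1 b2 b3 b4 by linarith
qed


lemma vv_mult_int: "x > 0 \<Longrightarrow> multiplicity (2::int) (int x) = vv x"
proof (induction x rule: less_induct)
  case (less x)
  show ?case
  proof (cases "even x")
    case True
    then obtain k where k: "x = 2*k" by blast
    hence k0: "k > 0" "k < x" using less.prems by auto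
    have "multiplicity (2::int) (2 * int k) = Suc (multiplicity 2 (int k))"
      by (rule multiplicity_times_same) (use k0 in auto)
    thus ?thesis using k k0 less.IH[of k] by simp
  next
    case False
    hence "\<not> (2::int) dvd int x" by presburger
    hence "multiplicity (2::int) (int x) = 0" by (rule not_dvd_imp_multiplicity_0)
    moreover have "vv x = 0" using False by (subst vv.simps) auto
    ultimately show ?thesis by simp
  qed
qed

lemma vv_mult: "x > 0 \<Longrightarrow> y > 0 \<Longrightarrow> vv (x*y) = vv x + vv y"
proof -
  assume a: "x > 0" "y > 0"
  have "multiplicity (2::int) (int x * int y) = multiplicity 2 (int x) + multiplicity 2 (int y)"
    by (rule prime_elem_multiplicity_mult_distrib) (use a in auto)
  thus ?thesis using vv_mult_int a by (metis of_nat_mult mult_pos_pos)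
qed

lemma vv_odd': "odd x \<Longrightarrow> vv x = 0" by (subst vv.simps) auto

lemma vv_fact_double: "vv (fact (2*k)) = k + vv (fact k)"
proof (induction k)
  case 0 thus ?case by (simp add: vv.simps)
next
  case (Suc k)
  have e: "fact (2 * Suc k) = (2 * Suc k) * (Suc (2*k) * (fact (2*k) :: nat))"
    by (simp add: fact_Suc algebra_simps)
  have p: "fact (2*k) > (0::nat)" "Suc (2*k) > 0" "2 * Suc k > 0" by auto
  have a1: "vv ((2*Suc k) * (Suc (2*k) * fact (2*k))) = vv (2*Suc k) + vv (Suc (2*k) * fact (2*k))"
    by (rule vv_mult) (use p in auto)
  have a2: "vv (Suc (2*k) * fact (2*k)) = vv (Suc (2*k)) + vv (fact (2*k))"
    by (rule vv_mult) (use p in auto)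
  have "vv (fact (2 * Suc k)) = vv (2 * Suc k) + (vv (Suc (2*k)) + vv (fact (2*k)))"
    unfolding e a1 a2 ..
  also have "\<dots> = Suc (vv (Suc k)) + k + vv (fact k)" using Suc vv_even[of "Suc k"] by simp
  moreover have "vv (fact (Suc k)) = vv (Suc k) + vv (fact k)"
  proof -
    have "fact (Suc k) = Suc k * (fact k :: nat)" by (simp only: fact_Suc of_nat_id)
    thus ?thesis by (simp only:) (rule vv_mult, auto)
  qed
  ultimately show ?case by simp
qed

lemma legendre: "vv (fact n) + bs n = n"
proof (induction n rule: nat_parity_induct)
  case 1 thus ?case by (simp add: vv.simps)
next
  case (2 k) thus ?case using vv_fact_double[of k] by simp
next
  case (3 k)
  have "fact (Suc (2*k)) = Suc (2*k) * (fact (2*k) :: nat)" by (simp only: fact_Suc of_nat_id)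
  hence "vv (fact (Suc (2*k))) = vv (Suc (2*k)) + vv (fact (2*k))"
    by (simp only:) (rule vv_mult, auto)
  thus ?case using 3 vv_fact_double[of k] by simp
qed

lemma v2_quot: assumes "a \<noteq> 0" "b \<noteq> 0"
  shows "v2 (of_int a / of_int b) = int (multiplicity 2 a) - int (multiplicity 2 b)"
proof -
  obtain p r where pr: "quotient_of (of_int a / of_int b) = (p, r)" by (cases "quotient_of (of_int a / of_int b)") auto
  have r0: "r > 0" using quotient_of_denom_pos[OF pr] .
  have eq: "(of_int a / of_int b :: rat) = of_int p / of_int r" using quotient_of_div[OF pr] .
  hence "(of_int a * of_int r :: rat) = of_int p * of_int b" using assms r0 by (simp add: field_simps)
  hence ar: "a * r = p * b" by (metis of_int_eq_iff of_int_mult)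
  have p0: "p \<noteq> 0" using ar assms r0 by auto
  have "multiplicity (2::int) (a*r) = multiplicity 2 a + multiplicity 2 r"
    by (rule prime_elem_multiplicity_mult_distrib) (use assms r0 in auto)
  moreover have "multiplicity (2::int) (p*b) = multiplicity 2 p + multiplicity 2 b"
    by (rule prime_elem_multiplicity_mult_distrib) (use assms p0 in auto)
  ultimately have "multiplicity (2::int) a + multiplicity 2 r = multiplicity 2 p + multiplicity 2 b"
    using ar by simp
  thus ?thesis unfolding v2_def pr by simp
qed


lemma vv_one[simp]: "vv (Suc 0) = 0" by (simp add: vv.simps)

lemma vv_pow: "x > 0 \<Longrightarrow> vv (x^k) = k * vv x"
proof (induction k)
  case 0 thus ?case by (simp add: vv_one)
next
  case (Suc k)
  have "vv (x * x^k) = vv x + vv (x^k)" by (rule vv_mult) (use Suc in auto)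
  thus ?case using Suc by simp
qed

lemma vv_prod: "finite S \<Longrightarrow> (\<And>i. i \<in> S \<Longrightarrow> f i > 0) \<Longrightarrow> vv (\<Prod>i\<in>S. f i) = (\<Sum>i\<in>S. vv (f i))"
proof (induction S rule: finite_induct)
  case empty thus ?case by (simp add: vv_one)
next
  case (insert x F)
  have "(\<Prod>i\<in>F. f i) > 0" using insert by (simp add: prod_pos)
  thus ?case using insert vv_mult[of "f x" "\<Prod>i\<in>F. f i"] by simp
qed

lemma mult_sign: "multiplicity (2::int) ((-1)^k * y) = multiplicity 2 y"
proof (cases "even k")
  case True thus ?thesis by simp
next
  case False
  hence "(-1::int)^k * y = - y" by simp
  moreover have "multiplicity (2::int) (- y) = multiplicity 2 y"
    using multiplicity_normalize_right[of "2::int" "-y"] multiplicity_normalize_right[of "2::int" "y"] by simp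
  ultimately show ?thesis by simp
qed

lemma gg_id: "i \<ge> 1 \<Longrightarrow> int k * gg i = int k * (int i - 2 * int (vv (i+1))) + (if i = 1 then int k else 0) + (if i = 3 then int k else 0)"
proof -
  assume i: "i \<ge> 1"
  have a: "vv (1+1) = 1" "vv (3+1) = 2" by (simp_all add: vv.simps)
  show ?thesis
  proof (cases "i = 1 \<or> i = 3")
    case True thus ?thesis using a by (auto simp: gg_def algebra_simps)
  next
    case False thus ?thesis by (simp add: gg_def)
  qed
qed


lemma ceil_help: "2 * Y \<ge> (D::int) \<Longrightarrow> \<lceil>of_int D / (2::rat)\<rceil> \<le> Y"
proof -
  assume "2 * Y \<ge> D"
  hence "(of_int D :: rat) \<le> 2 * of_int Y" by (metis of_int_le_iff of_int_mult of_int_numeral)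
  hence "of_int D / (2::rat) \<le> of_int Y" by simp
  thus ?thesis by (simp add: ceiling_le_iff)
qed

theorem lemma4p7:
  fixes u :: "nat \<Rightarrow> nat" and n :: nat
  assumes "is_partition u"
    and "weight u = n"
    and "int n - int (u 1) - 3 * int (u 3) > 0"
  shows "(int n - int (u 1) - 3 * int (u 3) = 7 * int (u 7) \<longrightarrow>
            v2 (tau u) \<ge> int (u 3) + \<lceil>of_int (int n - int (u 1) - 3 * int (u 3)) / (2::rat)\<rceil> - 3)
       \<and> (int n - int (u 1) - 3 * int (u 3) \<noteq> 7 * int (u 7) \<longrightarrow>
            v2 (tau u) \<ge> int (u 3) + \<lceil>of_int (int n - int (u 1) - 3 * int (u 3)) / (2::rat)\<rceil> - 1)"
proof -
  define S where "S = supp u"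
  define Dn where "Dn = int n - int (u 1) - 3 * int (u 3)"
  have finS: "finite S"
  proof -
    have "S \<subseteq> {i. u i \<noteq> 0}" by (auto simp: S_def supp_def)
    moreover have "finite {i. u i \<noteq> 0}" using assms(1) by (simp add: is_partition_def)
    ultimately show ?thesis by (rule finite_subset)
  qed
  have S1: "\<And>i. i \<in> S \<Longrightarrow> i \<ge> 1" "\<And>i. i \<in> S \<Longrightarrow> u i \<ge> 1" by (auto simp: S_def supp_def)
  have notS: "\<And>i. i \<ge> 1 \<Longrightarrow> i \<notin> S \<Longrightarrow> u i = 0" by (auto simp: S_def supp_def)
  have nS: "n = (\<Sum>i\<in>S. i * u i)" using assms(2) by (simp add: weight_def S_def)
  have dS: "degree u = (\<Sum>i\<in>S. u i)" by (simp add: degree_def S_def)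
  have sub: "n = (\<Sum>i\<in>T. i * u i)" if T: "finite T" "S \<subseteq> T" "\<And>i. i \<in> T \<Longrightarrow> i \<ge> 1" for T
  proof -
    have "(\<Sum>i\<in>S. i * u i) = (\<Sum>i\<in>T. i * u i)"
      by (rule sum.mono_neutral_left) (use T notS in auto)
    thus ?thesis using nS by simp
  qed
  have ex: "\<exists>i0\<in>S. i0 \<noteq> 1 \<and> i0 \<noteq> 3 \<and> (Dn \<noteq> 7 * int (u 7) \<longrightarrow> i0 \<noteq> 7)"
  proof (rule ccontr)
    assume na: "\<not> ?thesis"
    show False
    proof (cases "Dn = 7 * int (u 7)")
      case True
      hence "S \<subseteq> {1,3}" using na by auto
      moreover have "\<And>i::nat. i \<in> {1,3} \<Longrightarrow> i \<ge> 1" by auto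
      ultimately have "n = (\<Sum>i\<in>{1,3}. i * u i)" using sub[of "{1,3}"] by blast
      hence "n = u 1 + 3 * u 3" by simp
      thus False using assms(3) by simp
    next
      case False
      hence "S \<subseteq> {1,3,7}" using na by auto
      moreover have "\<And>i::nat. i \<in> {1,3,7} \<Longrightarrow> i \<ge> 1" by auto
      ultimately have "n = (\<Sum>i\<in>{1,3,7}. i * u i)" using sub[of "{1,3,7}"] by blast
      hence "n = u 1 + 3 * u 3 + 7 * u 7" by simp
      thus False using False Dn_def by simp
    qed
  qed
  then obtain i0 where i0: "i0 \<in> S" "i0 \<noteq> 1" "i0 \<noteq> 3" "Dn \<noteq> 7 * int (u 7) \<Longrightarrow> i0 \<noteq> 7" by blast
  have i02: "i0 \<ge> 2" using S1(1)[OF i0(1)] i0(2) by simp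
  have u0: "u i0 \<ge> 1" using S1(2)[OF i0(1)] .
  note cr = core[of S i0 u, OF finS S1(1) i0(1) i02 i0(3) u0]
  have hsum: "(\<Sum>i\<in>S. u i * (i+1)) = n + degree u"
    by (simp add: nS dS sum.distrib algebra_simps)
  have n2: "n \<ge> 2"
  proof -
    have "i0 * u i0 \<le> n" unfolding nS by (rule member_le_sum) (use i0 finS in auto)
    moreover have "2 * 1 \<le> i0 * u i0" using i02 u0 by (rule mult_le_mono)
    ultimately show ?thesis by simp
  qed
  define N where "N = n + degree u - 2"
  have NN: "int N = int n + int (degree u) - 2" using n2 N_def by simp
  have gpos: "\<And>i. i \<in> S \<Longrightarrow> (i+1)^(u i) * fact (u i) > (0::nat)" by simp
  have gam: "vv (gamma u) = (\<Sum>i\<in>S. vv ((i+1)^(u i) * fact (u i)))"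
    unfolding gamma_def S_def[symmetric] by (rule vv_prod[OF finS gpos])
  have gam2: "\<And>i. int (vv ((i+1)^(u i) * fact (u i))) = int (u i) * int (vv (i+1)) + int (u i) - int (bs (u i))"
  proof -
    fix i
    have "vv ((i+1)^(u i) * fact (u i)) = vv ((i+1)^(u i)) + vv (fact (u i))" by (rule vv_mult) auto
    moreover have "vv ((i+1)^(u i)) = u i * vv (i+1)" by (rule vv_pow) simp
    moreover have "vv (fact (u i)) + bs (u i) = u i" by (rule legendre)
    ultimately show "int (vv ((i+1)^(u i) * fact (u i))) = int (u i) * int (vv (i+1)) + int (u i) - int (bs (u i))"
      by simp
  qed
  have gpos2: "gamma u > 0" unfolding gamma_def by (rule prod_pos) simp
  have tau_eq: "tau u = of_int ((-1)^(degree u - 1) * int (fact N)) / of_int (int (gamma u))"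
    by (simp add: tau_def N_def assms(2))
  have v2t: "v2 (tau u) = int (vv (fact N)) - int (vv (gamma u))"
  proof -
    have f0: "(fact N :: nat) > 0" by simp
    have "v2 (tau u) = int (multiplicity 2 ((-1)^(degree u - 1) * int (fact N))) - int (multiplicity 2 (int (gamma u)))"
      unfolding tau_eq by (rule v2_quot) (use gpos2 in auto)
    also have "\<dots> = int (vv (fact N)) - int (vv (gamma u))"
      unfolding mult_sign vv_mult_int[OF f0] vv_mult_int[OF gpos2] ..
    finally show ?thesis .
  qed
  have legN: "vv (fact N) + bs N = N" by (rule legendre)
  define A where "A = (\<Sum>i\<in>S. int (u i) * (int i - 2 * int (vv (i+1))))"
  define B where "B = (\<Sum>i\<in>S. int (u i) * int (vv (i+1)))"
  define Cc where "Cc = (\<Sum>i\<in>S. int (bs (u i)))"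
  define D where "D = (\<Sum>i\<in>S. int (u i))"
  define G where "G = (\<Sum>i\<in>S. int (u i) * gg i)"
  have hD: "int (degree u) = D" unfolding D_def dS by simp
  have hn: "int n = (\<Sum>i\<in>S. int (u i) * int i)" unfolding nS by (simp add: mult.commute)
  have hA: "A = int n - 2 * B"
    unfolding A_def B_def hn by (simp add: algebra_simps sum_subtractf sum_distrib_left)
  have hgam: "int (vv (gamma u)) = B + D - Cc"
  proof -
    have "int (vv (gamma u)) = (\<Sum>i\<in>S. int (u i) * int (vv (i+1)) + int (u i) - int (bs (u i)))"
      unfolding gam of_nat_sum using gam2 by simp
    thus ?thesis unfolding B_def D_def Cc_def by (simp add: sum_subtractf sum.distrib)
  qed
  have hG: "G = A + int (u 1) + int (u 3)"
  proof -
    have "G = (\<Sum>i\<in>S. int (u i) * (int i - 2 * int (vv (i+1))) + (if i = 1 then int (u i) else 0) + (if i = 3 then int (u i) else 0))"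
      unfolding G_def by (rule sum.cong) (use gg_id S1 in auto)
    also have "\<dots> = A + (\<Sum>i\<in>S. if i = 1 then int (u i) else 0) + (\<Sum>i\<in>S. if i = 3 then int (u i) else 0)"
      unfolding A_def by (simp add: sum.distrib)
    also have "(\<Sum>i\<in>S. if i = 1 then int (u i) else 0) = int (u 1)"
      using finS notS[of 1] by (simp add: sum.delta)
    also have "(\<Sum>i\<in>S. if i = 3 then int (u i) else 0) = int (u 3)"
      using finS notS[of 3] by (simp add: sum.delta)
    finally show ?thesis .
  qed
  have hcore: "2 * int (bs N) + 2 \<le> G + 2 * Cc + (if i0 = 7 then 4 else 0)"
  proof -
    have "(\<Sum>i\<in>S. int (u i) * gg i + 2 * int (bs (u i))) = G + 2 * Cc"
      unfolding G_def Cc_def by (simp add: sum.distrib sum_distrib_left)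
    moreover have "(\<Sum>i\<in>S. u i * (i+1)) - 2 = N" using hsum N_def by simp
    ultimately show ?thesis using cr by simp
  qed
  have key: "2 * (v2 (tau u) - int (u 3) + 1) + (if i0 = 7 then 4 else 0) \<ge> Dn"
    using v2t legN hgam hG hA hcore NN hD unfolding Dn_def by (simp split: if_splits; linarith)
  show ?thesis
  proof (intro conjI impI)
    assume "int n - int (u 1) - 3 * int (u 3) = 7 * int (u 7)"
    have "2 * (v2 (tau u) - int (u 3) + 3) \<ge> Dn" using key by (simp split: if_splits)
    from ceil_help[OF this] show "v2 (tau u) \<ge> int (u 3) + \<lceil>of_int (int n - int (u 1) - 3 * int (u 3)) / (2::rat)\<rceil> - 3"
      unfolding Dn_def by simp
  next
    assume "int n - int (u 1) - 3 * int (u 3) \<noteq> 7 * int (u 7)"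
    hence "i0 \<noteq> 7" using i0(4) Dn_def by simp
    hence "2 * (v2 (tau u) - int (u 3) + 1) \<ge> Dn" using key by simp
    from ceil_help[OF this] show "v2 (tau u) \<ge> int (u 3) + \<lceil>of_int (int n - int (u 1) - 3 * int (u 3)) / (2::rat)\<rceil> - 1"
      unfolding Dn_def by simp
  qed
qed

end
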